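(* If $G$ is a connected graph of order $n$ with maximum degree $\Delta$, then $F_c(G)\le \gamma_c(G)(\Delta-2)+2$ if $\Delta\in\{1,2,n-1\}$, and $F_c(G)\le \gamma_c(G)(\Delta-1)$ if $3\le \Delta\le n-2$.
   Context: Forcing process: given a set of initially colored vertices, at each step a colored vertex with exactly one non-colored neighbor forces (colors) that neighbor. A set $S\subseteq V(G)$ is a forcing set if iterating this process from $S$ eventually colors all vertices; it is a connected forcing set if moreover the induced subgraph $G[S]$ is connected. $F_c(G)$ is the minimum cardinality of a connected forcing set of $G$. A connected dominating set is a set $D\subseteq V(G)$ such that every vertex outside $D$ has a neighbor in $D$ and $G[D]$ is connected; $\gamma_c(G)$ is the minimum cardinality of a connected dominating set. *)

theory Defs
  imports Main
begin

definition graph :: "'a set \<Rightarrow> ('a \<Rightarrow> 'a \<Rightarrow> bool) \<Rightarrow> bool" where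
  "graph V E \<longleftrightarrow> finite V \<and> (\<forall>x y. E x y \<longrightarrow> E y x) \<and> (\<forall>x. \<not> E x x)
     \<and> (\<forall>x y. E x y \<longrightarrow> x \<in> V \<and> y \<in> V)"

definition connected_set :: "('a \<Rightarrow> 'a \<Rightarrow> bool) \<Rightarrow> 'a set \<Rightarrow> bool" where
  "connected_set E S \<longleftrightarrow> S \<noteq> {} \<and>
     (\<forall>x\<in>S. \<forall>y\<in>S. (\<lambda>a b. E a b \<and> a \<in> S \<and> b \<in> S)\<^sup>*\<^sup>* x y)"

definition connected_graph :: "'a set \<Rightarrow> ('a \<Rightarrow> 'a \<Rightarrow> bool) \<Rightarrow> bool" where
  "connected_graph V E \<longleftrightarrow> graph V E \<and> connected_set E V"

definition degree :: "'a set \<Rightarrow> ('a \<Rightarrow> 'a \<Rightarrow> bool) \<Rightarrow> 'a \<Rightarrow> nat" where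
  "degree V E v = card {w \<in> V. E v w}"

definition max_degree :: "'a set \<Rightarrow> ('a \<Rightarrow> 'a \<Rightarrow> bool) \<Rightarrow> nat" where
  "max_degree V E = Max (degree V E ` V)"

inductive colored :: "('a \<Rightarrow> 'a \<Rightarrow> bool) \<Rightarrow> 'a set \<Rightarrow> 'a \<Rightarrow> bool"
  for E :: "'a \<Rightarrow> 'a \<Rightarrow> bool" and S :: "'a set" where
  init: "v \<in> S \<Longrightarrow> colored E S v"
| force: "colored E S u \<Longrightarrow> E u v \<Longrightarrow> (\<forall>w. E u w \<and> w \<noteq> v \<longrightarrow> colored E S w)
           \<Longrightarrow> colored E S v"

definition forcing_set :: "'a set \<Rightarrow> ('a \<Rightarrow> 'a \<Rightarrow> bool) \<Rightarrow> 'a set \<Rightarrow> bool" where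
  "forcing_set V E S \<longleftrightarrow> S \<subseteq> V \<and> (\<forall>v\<in>V. colored E S v)"

definition connected_forcing_set :: "'a set \<Rightarrow> ('a \<Rightarrow> 'a \<Rightarrow> bool) \<Rightarrow> 'a set \<Rightarrow> bool" where
  "connected_forcing_set V E S \<longleftrightarrow> forcing_set V E S \<and> connected_set E S"

definition connected_forcing_number :: "'a set \<Rightarrow> ('a \<Rightarrow> 'a \<Rightarrow> bool) \<Rightarrow> nat" where
  "connected_forcing_number V E = (LEAST k. \<exists>S. connected_forcing_set V E S \<and> card S = k)"

definition connected_dominating_set :: "'a set \<Rightarrow> ('a \<Rightarrow> 'a \<Rightarrow> bool) \<Rightarrow> 'a set \<Rightarrow> bool" where
  "connected_dominating_set V E D \<longleftrightarrow> D \<subseteq> V \<and> (\<forall>v\<in>V - D. \<exists>u\<in>D. E v u)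
     \<and> connected_set E D"

definition connected_domination_number :: "'a set \<Rightarrow> ('a \<Rightarrow> 'a \<Rightarrow> bool) \<Rightarrow> nat" where
  "connected_domination_number V E = (LEAST k. \<exists>D. connected_dominating_set V E D \<and> card D = k)"

end

theory Submission
  imports Defs
begin

lemma boundary:
  assumes "connected_set E V" "a \<in> V" "a \<in> P" "b \<in> V" "b \<notin> P"
  shows "\<exists>c d. c \<in> V \<and> d \<in> V \<and> c \<in> P \<and> d \<notin> P \<and> E c d"
proof -
  have "(\<lambda>x y. E x y \<and> x \<in> V \<and> y \<in> V)\<^sup>*\<^sup>* a b" using assms unfolding connected_set_def by blast
  then show ?thesis using assms(3,5)
  proof (induction rule: rtranclp_induct)
    case base then show ?case by simp
  next
    case (step y z) then show ?case by blast
  qed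
qed

lemma colored_nb: "colored E S x \<Longrightarrow> x \<in> S \<or> (\<exists>y. colored E S y \<and> E y x)"
  by (induction rule: colored.induct) auto

lemma deg_le_max: "graph V E \<Longrightarrow> v \<in> V \<Longrightarrow> degree V E v \<le> max_degree V E"
  unfolding max_degree_def graph_def by (simp add: Max_ge)

lemma card_nbrs: "graph V E \<Longrightarrow> v \<in> V \<Longrightarrow> B \<subseteq> {w\<in>V. E v w} \<Longrightarrow> card B \<le> max_degree V E"
proof -
  assume a: "graph V E" "v \<in> V" "B \<subseteq> {w\<in>V. E v w}"
  have "finite {w\<in>V. E v w}" using a(1) unfolding graph_def by simp
  then have "card B \<le> card {w\<in>V. E v w}" using a(3) by (rule card_mono)
  then show ?thesis using deg_le_max[OF a(1,2)] unfolding degree_def by linarith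
qed

lemma graph_E: "graph V E \<Longrightarrow> E x y \<Longrightarrow> x \<in> V \<and> y \<in> V \<and> E y x \<and> x \<noteq> y"
  unfolding graph_def by blast

lemma get_edge:
  assumes "connected_graph V E" "card V \<ge> 2"
  obtains u d where "u \<in> V" "d \<in> V" "E u d"
proof -
  have g: "graph V E" "connected_set E V" using assms unfolding connected_graph_def by auto
  obtain u b where ub: "u \<in> V" "b \<in> V" "b \<noteq> u"
  proof -
    have "\<not> card V \<le> 1" using assms(2) by linarith
    then have "\<not> (\<forall>x\<in>V. \<forall>y\<in>V. x = y)" using card_le_Suc0_iff_eq[of V] g(1) unfolding graph_def by simp
    then show ?thesis using that by blast
  qed
  have "b \<notin> {u}" using ub by simp
  from boundary[OF g(2) ub(1) _ ub(2) this] obtain c d where "c \<in> V" "d \<in> V" "c \<in> {u}" "E c d" by blast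
  then show ?thesis using that by blast
qed

lemma case_two:
  assumes "connected_graph V E" "card V \<ge> 2" "max_degree V E \<le> 2"
  shows "connected_forcing_number V E \<le> 2"
proof -
  have g: "graph V E" "connected_set E V" using assms unfolding connected_graph_def by auto
  obtain u d where ud: "u \<in> V" "d \<in> V" "E u d" using get_edge[OF assms(1,2)] by blast
  have du: "E d u" "u \<noteq> d" using graph_E[OF g(1) ud(3)] by auto
  define S where "S = {u, d}"
  have cs: "connected_set E S"
    unfolding connected_set_def S_def using ud du
    by (auto intro: r_into_rtranclp)
  have col: "colored E S v" if v: "v \<in> V" for v
  proof (rule ccontr)
    assume nv: "\<not> colored E S v"
    have cu: "colored E S u" unfolding S_def by (rule colored.init) simp
    obtain c w where cw: "c \<in> V" "w \<in> V" "colored E S c" "\<not> colored E S w" "E c w"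
      using boundary[OF g(2) ud(1), of "{x. colored E S x}" v] cu nv v by auto
    have "\<exists>y. colored E S y \<and> E c y"
    proof (cases "c \<in> S")
      case True
      then show ?thesis unfolding S_def using ud du
        by (auto intro: colored.init simp: S_def)
    next
      case False
      then show ?thesis using colored_nb[OF cw(3)] graph_E[OF g(1)] by blast
    qed
    then obtain y where y: "colored E S y" "E c y" by blast
    have "\<forall>z. E c z \<and> z \<noteq> w \<longrightarrow> colored E S z"
    proof (intro allI impI, rule ccontr)
      fix z assume z: "E c z \<and> z \<noteq> w" "\<not> colored E S z"
      have "{y, w, z} \<subseteq> {x\<in>V. E c x}" using y cw z graph_E[OF g(1)] by auto
      moreover have "y \<noteq> w" "y \<noteq> z" using y cw z by metis+
      moreover have "w \<noteq> z" using z by auto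
      moreover have "card {y, w, z} = 3" using calculation by simp
      ultimately show False using card_nbrs[OF g(1) cw(1), of "{y,w,z}"] assms(3) by linarith
    qed
    then have "colored E S w" using colored.force[OF cw(3) cw(5)] by blast
    then show False using cw by simp
  qed
  have "connected_forcing_set V E S"
    unfolding connected_forcing_set_def forcing_set_def
  proof (intro conjI ballI)
    show "S \<subseteq> V" unfolding S_def using ud by simp
  qed (use cs col in auto)
  then have "connected_forcing_number V E \<le> card S"
    unfolding connected_forcing_number_def by (intro Least_le) blast
  moreover have "card S = 2" unfolding S_def using du(2) by simp
  ultimately show ?thesis by simp
qed

lemma case_one:
  assumes "connected_graph V E" "card V \<ge> 2" "max_degree V E \<le> 1"
  shows "card V = 2"
proof -
  have g: "graph V E" "connected_set E V" using assms unfolding connected_graph_def by auto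
  obtain u d where ud: "u \<in> V" "d \<in> V" "E u d" using get_edge[OF assms(1,2)] by blast
  have du: "E d u" "u \<noteq> d" using graph_E[OF g(1) ud(3)] by auto
  have "V \<subseteq> {u, d}"
  proof
    fix w assume w: "w \<in> V"
    show "w \<in> {u, d}"
    proof (rule ccontr)
      assume "w \<notin> {u, d}"
      then obtain c e where ce: "c \<in> V" "e \<in> V" "c \<in> {u,d}" "e \<notin> {u,d}" "E c e"
        using boundary[OF g(2) ud(1), of "{u,d}" w] w by auto
      show False
      proof (cases "c = u")
        case True
        have "{d, e} \<subseteq> {x\<in>V. E c x}" using True ce ud by auto
        moreover have "card {d, e} = 2" using ce by auto
        ultimately show False using card_nbrs[OF g(1) ce(1), of "{d,e}"] assms(3) by linarith
      next
        case False
        then have "c = d" using ce by auto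
        have "{u, e} \<subseteq> {x\<in>V. E c x}" using \<open>c = d\<close> ce ud du by auto
        moreover have "card {u, e} = 2" using ce by auto
        ultimately show False using card_nbrs[OF g(1) ce(1), of "{u,e}"] assms(3) by linarith
      qed
    qed
  qed
  then have "V = {u, d}" using ud by auto
  then show ?thesis using du by simp
qed

lemma gamma_exists:
  assumes "connected_graph V E"
  shows "\<exists>D. connected_dominating_set V E D \<and> card D = connected_domination_number V E"
proof -
  have "connected_dominating_set V E V"
    using assms unfolding connected_graph_def connected_dominating_set_def by auto
  then have "\<exists>k D. connected_dominating_set V E D \<and> card D = k" by blast
  then show ?thesis unfolding connected_domination_number_def by (rule LeastI_ex)
qed

lemma cds_card:
  assumes "graph V E" "connected_dominating_set V E D"
  shows "card D \<ge> 1" "finite D" "D \<subseteq> V"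
proof -
  show "D \<subseteq> V" using assms(2) unfolding connected_dominating_set_def by auto
  then show f: "finite D" using assms(1) unfolding graph_def using finite_subset by blast
  have "D \<noteq> {}" using assms(2) unfolding connected_dominating_set_def connected_set_def by auto
  then show "card D \<ge> 1" using f by (simp add: Suc_le_eq card_gt_0_iff)
qed

lemma two_vertices:
  assumes "graph V E" "card V \<ge> 2" "v \<in> V"
  obtains x where "x \<in> V" "x \<noteq> v"
proof -
  have "\<not> card V \<le> 1" using assms(2) by linarith
  then have "\<not> (\<forall>x\<in>V. \<forall>y\<in>V. x = y)" using card_le_Suc0_iff_eq[of V] assms(1) unfolding graph_def by simp
  then show ?thesis using that assms(3) by metis
qed

lemma case_full:
  assumes "connected_graph V E" "card V \<ge> 2" "max_degree V E = card V - 1"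
  shows "connected_forcing_number V E \<le> card V - 1 \<and> connected_domination_number V E = 1"
proof -
  have g: "graph V E" "connected_set E V" using assms unfolding connected_graph_def by auto
  have fin: "finite V" using g(1) unfolding graph_def by simp
  have ne: "V \<noteq> {}" using assms(2) by auto
  have "max_degree V E \<in> degree V E ` V" unfolding max_degree_def using fin ne by (simp add: Max_in)
  then obtain v where v: "v \<in> V" "degree V E v = card V - 1" using assms(3) by auto
  have sub: "{w\<in>V. E v w} \<subseteq> V - {v}" using graph_E[OF g(1)] by auto
  have "card {w\<in>V. E v w} = card (V - {v})" using v fin unfolding degree_def by simp
  then have nbr: "{w\<in>V. E v w} = V - {v}" using sub fin by (simp add: card_subset_eq)
  have "connected_dominating_set V E {v}"
    unfolding connected_dominating_set_def connected_set_def
    using v nbr graph_E[OF g(1)] by auto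
  then have "connected_domination_number V E \<le> card {v}"
    unfolding connected_domination_number_def by (intro Least_le) blast
  moreover obtain D where "connected_dominating_set V E D" "card D = connected_domination_number V E"
    using gamma_exists[OF assms(1)] by blast
  ultimately have gam: "connected_domination_number V E = 1" using cds_card[OF g(1)] by fastforce
  obtain x where x: "x \<in> V" "x \<noteq> v" using two_vertices[OF g(1) assms(2) v(1)] by blast
  define S where "S = V - {x}"
  let ?R = "\<lambda>a b. E a b \<and> a \<in> S \<and> b \<in> S"
  have tov: "?R\<^sup>*\<^sup>* y v \<and> ?R\<^sup>*\<^sup>* v y" if "y \<in> S" for y
  proof (cases "y = v")
    case True then show ?thesis by simp
  next
    case False
    then have "E v y" "E y v" using nbr that graph_E[OF g(1)] unfolding S_def by auto
    then show ?thesis using that v x unfolding S_def by (auto intro: r_into_rtranclp)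
  qed
  have cs: "connected_set E S"
    unfolding connected_set_def
  proof (intro conjI ballI)
    show "S \<noteq> {}" using v x unfolding S_def by auto
  next
    fix y z assume "y \<in> S" "z \<in> S"
    then show "?R\<^sup>*\<^sup>* y z" using tov by (meson rtranclp_trans)
  qed
  have col: "colored E S w" if "w \<in> V" for w
  proof (cases "w = x")
    case False then show ?thesis using that unfolding S_def by (auto intro: colored.init)
  next
    case True
    have cv: "colored E S v" using v x unfolding S_def by (auto intro: colored.init)
    have "E v x" using nbr x by auto
    moreover have "\<forall>w'. E v w' \<and> w' \<noteq> x \<longrightarrow> colored E S w'"
      using graph_E[OF g(1)] unfolding S_def by (auto intro: colored.init)
    ultimately show ?thesis using True colored.force[OF cv] by blast
  qed
  have "connected_forcing_set V E S"
    unfolding connected_forcing_set_def forcing_set_def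
  proof (intro conjI ballI)
    show "S \<subseteq> V" unfolding S_def by auto
  qed (use cs col in auto)
  then have "connected_forcing_number V E \<le> card S"
    unfolding connected_forcing_number_def by (intro Least_le) blast
  moreover have "card S = card V - 1" unfolding S_def using x fin by simp
  ultimately show ?thesis using gam by simp
qed

lemma build:
  assumes g: "graph V E" and fA: "finite A" and AD: "A \<subseteq> D" and DV: "D \<subseteq> V"
    and nb: "\<forall>a\<in>D. \<exists>b\<in>D. E a b"
  shows "\<exists>X. X \<subseteq> {w\<in>V-D. \<exists>a\<in>A. E a w} \<and> (\<forall>U\<subseteq>X. U \<noteq> {} \<longrightarrow> (\<exists>d\<in>A. \<exists>w. {u\<in>U. E d u} = {w}))
      \<and> card ({w\<in>V-D. \<exists>a\<in>A. E a w} - X) \<le> card A * (max_degree V E - 2)"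
  using fA AD
proof (induction A rule: finite_induct)
  case empty
  show ?case by (intro exI[of _ "{}"]) auto
next
  case (insert a A)
  have fV: "finite V" using g unfolding graph_def by simp
  define N where "N = {w\<in>V-D. \<exists>a\<in>A. E a w}"
  define New where "New = {w\<in>V-D. E a w} - N"
  obtain X where X: "X \<subseteq> N" "\<forall>U\<subseteq>X. U \<noteq> {} \<longrightarrow> (\<exists>d\<in>A. \<exists>w. {u\<in>U. E d u} = {w})"
      "card (N - X) \<le> card A * (max_degree V E - 2)"
    using insert unfolding N_def by auto
  have N': "{w\<in>V-D. \<exists>a'\<in>insert a A. E a' w} = N \<union> New" unfolding N_def New_def by auto
  have fN: "finite N" "finite New" using fV unfolding N_def New_def by auto
  have aD: "a \<in> D" using insert by auto
  then obtain b where b: "b \<in> D" "E a b" using nb by blast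
  have "insert b New \<subseteq> {w\<in>V. E a w}" using b DV unfolding New_def by auto
  then have "card (insert b New) \<le> max_degree V E"
    using card_nbrs[OF g] aD DV by blast
  moreover have "b \<notin> New" using b unfolding New_def by auto
  ultimately have cNew: "card New + 1 \<le> max_degree V E" using fN by simp
  have cA: "card (insert a A) = card A + 1" using insert by simp
  show ?case
  proof (cases "New = {}")
    case True
    show ?thesis
    proof (intro exI[of _ X] conjI)
      show "X \<subseteq> {w\<in>V-D. \<exists>a'\<in>insert a A. E a' w}" using X(1) N' by auto
      show "\<forall>U\<subseteq>X. U \<noteq> {} \<longrightarrow> (\<exists>d\<in>insert a A. \<exists>w. {u\<in>U. E d u} = {w})" using X(2) by blast
      have "card ({w\<in>V-D. \<exists>a'\<in>insert a A. E a' w} - X) = card (N - X)" using N' True by simp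
      also have "\<dots> \<le> card A * (max_degree V E - 2)" by (rule X(3))
      also have "\<dots> \<le> card (insert a A) * (max_degree V E - 2)" using cA by simp
      finally show "card ({w\<in>V-D. \<exists>a'\<in>insert a A. E a' w} - X) \<le> card (insert a A) * (max_degree V E - 2)" .
    qed
  next
    case False
    then obtain x where x: "x \<in> New" by blast
    have xN: "x \<notin> N" "x \<in> V - D" "E a x" using x unfolding New_def by auto
    have noE: "\<not> E d x" if "d \<in> A" for d using xN that unfolding N_def by auto
    show ?thesis
    proof (intro exI[of _ "insert x X"] conjI)
      show "insert x X \<subseteq> {w\<in>V-D. \<exists>a'\<in>insert a A. E a' w}" using X(1) N' x by auto
      show "\<forall>U\<subseteq>insert x X. U \<noteq> {} \<longrightarrow> (\<exists>d\<in>insert a A. \<exists>w. {u\<in>U. E d u} = {w})"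
      proof (intro allI impI)
        fix U assume U: "U \<subseteq> insert x X" "U \<noteq> {}"
        show "\<exists>d\<in>insert a A. \<exists>w. {u\<in>U. E d u} = {w}"
        proof (cases "x \<in> U")
          case False
          then have "U \<subseteq> X" using U by auto
          then show ?thesis using X(2) U(2) by blast
        next
          case True
          show ?thesis
          proof (cases "U - {x} = {}")
            case True
            then have "U = {x}" using \<open>x \<in> U\<close> by auto
            then have "{u\<in>U. E a u} = {x}" using xN by auto
            then show ?thesis by blast
          next
            case False
            have "U - {x} \<subseteq> X" using U by auto
            then obtain d w where dw: "d \<in> A" "{u\<in>U - {x}. E d u} = {w}" using X(2) False by blast
            then have "{u\<in>U. E d u} = {w}" using noE[OF dw(1)] by auto
            then show ?thesis using dw(1) by blast
          qed
        qed
      qed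
      have "{w\<in>V-D. \<exists>a'\<in>insert a A. E a' w} - insert x X = (N - X) \<union> (New - {x})"
        using N' X(1) xN unfolding New_def by auto
      then have "card ({w\<in>V-D. \<exists>a'\<in>insert a A. E a' w} - insert x X) \<le> card (N - X) + card (New - {x})"
        by (simp add: card_Un_le)
      also have "card (New - {x}) = card New - 1" using x fN by simp
      finally have fin: "card ({w\<in>V-D. \<exists>a'\<in>insert a A. E a' w} - insert x X) \<le> card (N - X) + (card New - 1)" .
      then show "card ({w\<in>V-D. \<exists>a'\<in>insert a A. E a' w} - insert x X) \<le> card (insert a A) * (max_degree V E - 2)"
      proof -
        have "card New - 1 \<le> max_degree V E - 2" using cNew by linarith
        moreover have "card (insert a A) * (max_degree V E - 2) = card A * (max_degree V E - 2) + (max_degree V E - 2)"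
          using cA by simp
        ultimately show ?thesis using X(3) fin by linarith
      qed
    qed
  qed
qed

lemma case_main:
  assumes cg: "connected_graph V E" and n2: "card V \<ge> 2" and d3: "3 \<le> max_degree V E"
    and dn: "max_degree V E \<le> card V - 2"
  shows "connected_forcing_number V E \<le> connected_domination_number V E * (max_degree V E - 1)"
proof -
  have g: "graph V E" "connected_set E V" using cg unfolding connected_graph_def by auto
  have fV: "finite V" using g(1) unfolding graph_def by simp
  obtain D where D: "connected_dominating_set V E D" "card D = connected_domination_number V E"
    using gamma_exists[OF cg] by blast
  have D1: "card D \<ge> 1" "finite D" "D \<subseteq> V" using cds_card[OF g(1) D(1)] by auto
  have dom: "\<forall>v\<in>V - D. \<exists>u\<in>D. E v u" and csD: "connected_set E D"
    using D(1) unfolding connected_dominating_set_def by auto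
  have D2: "card D \<ge> 2"
  proof (rule ccontr)
    assume "\<not> card D \<ge> 2"
    then have "card D = 1" using D1 by linarith
    then obtain d where d: "D = {d}" by (rule card_1_singletonE)
    have "V - {d} \<subseteq> {w\<in>V. E d w}"
    proof
      fix w assume w: "w \<in> V - {d}"
      then have "E w d" using dom d by auto
      then show "w \<in> {w\<in>V. E d w}" using graph_E[OF g(1) \<open>E w d\<close>] by simp
    qed
    moreover have "d \<in> V" using d D1 by auto
    ultimately have "card (V - {d}) \<le> max_degree V E" using card_nbrs[OF g(1)] by blast
    moreover have "card (V - {d}) = card V - 1" using d D1 fV by simp
    ultimately show False using dn d3 by linarith
  qed
  have nb: "\<forall>a\<in>D. \<exists>b\<in>D. E a b"
  proof
    fix a assume a: "a \<in> D"
    obtain y where y: "y \<in> D" "y \<noteq> a"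
    proof -
      have "\<not> card D \<le> 1" using D2 by linarith
      then have "\<not> (\<forall>x\<in>D. \<forall>y\<in>D. x = y)" using card_le_Suc0_iff_eq[of D] D1 by simp
      then show ?thesis using that a by metis
    qed
    have "(\<lambda>x y. E x y \<and> x \<in> D \<and> y \<in> D)\<^sup>*\<^sup>* a y" using csD a y unfolding connected_set_def by blast
    then show "\<exists>b\<in>D. E a b"
    proof (cases rule: converse_rtranclpE)
      case base then show ?thesis using y by simp
    next
      case (step z) then show ?thesis by blast
    qed
  qed
  obtain X where X: "X \<subseteq> {w\<in>V-D. \<exists>a\<in>D. E a w}"
    "\<forall>U\<subseteq>X. U \<noteq> {} \<longrightarrow> (\<exists>d\<in>D. \<exists>w. {u\<in>U. E d u} = {w})"
    "card ({w\<in>V-D. \<exists>a\<in>D. E a w} - X) \<le> card D * (max_degree V E - 2)"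
    using build[OF g(1) D1(2) subset_refl D1(3) nb] by blast
  have ND: "{w\<in>V-D. \<exists>a\<in>D. E a w} = V - D"
  proof (intro set_eqI iffI)
    fix w assume "w \<in> {w\<in>V-D. \<exists>a\<in>D. E a w}" then show "w \<in> V - D" by simp
  next
    fix w assume w: "w \<in> V - D"
    then obtain u where u: "u \<in> D" "E w u" using dom by blast
    have "E u w" using graph_E[OF g(1) u(2)] by simp
    then show "w \<in> {w\<in>V-D. \<exists>a\<in>D. E a w}" using w u(1) by blast
  qed
  define S where "S = V - X"
  have XV: "X \<subseteq> V - D" using X(1) ND by auto
  have DS: "D \<subseteq> S" using XV D1 unfolding S_def by auto
  have Sdec: "S = D \<union> (V - D - X)" using XV D1 unfolding S_def by auto
  have "card S = card D + card (V - D - X)"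
    unfolding Sdec using D1 fV by (subst card_Un_disjoint) auto
  also have "\<dots> \<le> card D + card D * (max_degree V E - 2)" using X(3) ND by simp
  also have "\<dots> = card D * (max_degree V E - 1)"
  proof -
    have "max_degree V E - 1 = Suc (max_degree V E - 2)" using d3 by linarith
    then show ?thesis by simp
  qed
  finally have cS: "card S \<le> card D * (max_degree V E - 1)" .
  let ?RS = "\<lambda>a b. E a b \<and> a \<in> S \<and> b \<in> S"
  let ?RD = "\<lambda>a b. E a b \<and> a \<in> D \<and> b \<in> D"
  have mono: "?RD\<^sup>*\<^sup>* a b \<Longrightarrow> ?RS\<^sup>*\<^sup>* a b" for a b
    by (rule rtranclp_mono[THEN predicate2D, rotated]) (use DS in auto)
  have toD: "\<exists>d\<in>D. ?RS\<^sup>*\<^sup>* x d \<and> ?RS\<^sup>*\<^sup>* d x" if x: "x \<in> S" for x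
  proof (cases "x \<in> D")
    case True then show ?thesis by blast
  next
    case False
    then obtain d where d: "d \<in> D" "E x d" using dom x unfolding S_def by blast
    then have "E d x" using graph_E[OF g(1) d(2)] by simp
    have "d \<in> S" using d(1) DS by blast
    then have "?RS x d" "?RS d x" using d \<open>E d x\<close> x by auto
    then show ?thesis using d(1) by (blast intro: r_into_rtranclp)
  qed
  have cs: "connected_set E S"
    unfolding connected_set_def
  proof (intro conjI ballI)
    show "S \<noteq> {}" using DS csD unfolding connected_set_def by auto
  next
    fix y z assume yz: "y \<in> S" "z \<in> S"
    obtain d1 where d1: "d1 \<in> D" "?RS\<^sup>*\<^sup>* y d1" using toD[OF yz(1)] by blast
    obtain d2 where d2: "d2 \<in> D" "?RS\<^sup>*\<^sup>* d2 z" using toD[OF yz(2)] by blast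
    have "?RD\<^sup>*\<^sup>* d1 d2" using csD d1 d2 unfolding connected_set_def by blast
    then have "?RS\<^sup>*\<^sup>* d1 d2" by (rule mono)
    then show "?RS\<^sup>*\<^sup>* y z" using d1 d2 by (meson rtranclp_trans)
  qed
  have col: "colored E S v" if v: "v \<in> V" for v
  proof (rule ccontr)
    assume nv: "\<not> colored E S v"
    define U where "U = {v\<in>V. \<not> colored E S v}"
    have "U \<subseteq> X" unfolding U_def S_def by (auto intro: colored.init)
    moreover have "U \<noteq> {}" using v nv unfolding U_def by auto
    ultimately obtain d w where dw: "d \<in> D" "{u\<in>U. E d u} = {w}" using X(2) by blast
    have w: "w \<in> U" "E d w" using dw(2) by auto
    have cd: "colored E S d" using dw(1) DS by (auto intro: colored.init)
    have "\<forall>w'. E d w' \<and> w' \<noteq> w \<longrightarrow> colored E S w'"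
    proof (intro allI impI)
      fix w' assume w': "E d w' \<and> w' \<noteq> w"
      show "colored E S w'"
      proof (rule ccontr)
        assume "\<not> colored E S w'"
        then have "w' \<in> {u\<in>U. E d u}" using w' graph_E[OF g(1)] unfolding U_def by auto
        then show False using dw(2) w' by auto
      qed
    qed
    then have "colored E S w" using colored.force[OF cd w(2)] by blast
    then show False using w(1) unfolding U_def by auto
  qed
  have "connected_forcing_set V E S"
    unfolding connected_forcing_set_def forcing_set_def
  proof (intro conjI ballI)
    show "S \<subseteq> V" unfolding S_def by auto
  qed (use cs col in auto)
  then have "connected_forcing_number V E \<le> card S"
    unfolding connected_forcing_number_def by (intro Least_le) blast
  then show ?thesis using cS D(2) by simp
qed

theorem theorem4:
  fixes V :: "'a set" and E :: "'a \<Rightarrow> 'a \<Rightarrow> bool"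
  assumes "connected_graph V E"
    and "card V \<ge> 2"
  shows "(max_degree V E \<in> {1, 2, card V - 1} \<longrightarrow>
           int (connected_forcing_number V E)
             \<le> int (connected_domination_number V E) * (int (max_degree V E) - 2) + 2)
       \<and> (3 \<le> max_degree V E \<and> max_degree V E \<le> card V - 2 \<longrightarrow>
           int (connected_forcing_number V E)
             \<le> int (connected_domination_number V E) * (int (max_degree V E) - 1))"
proof (intro conjI impI)
  assume h: "max_degree V E \<in> {1, 2, card V - 1}"
  show "int (connected_forcing_number V E)
             \<le> int (connected_domination_number V E) * (int (max_degree V E) - 2) + 2"
  proof (cases "max_degree V E = 2")
    case True
    then have "connected_forcing_number V E \<le> 2" using case_two[OF assms] by simp
    then show ?thesis using True by simp
  next
    case False
    have "max_degree V E = card V - 1"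
    proof (cases "max_degree V E = 1")
      case True
      then have "card V = 2" using case_one[OF assms] by simp
      then show ?thesis using True by simp
    next
      case False
      then show ?thesis using h \<open>max_degree V E \<noteq> 2\<close> by simp
    qed
    then have c: "connected_forcing_number V E \<le> card V - 1" "connected_domination_number V E = 1"
      using case_full[OF assms] by auto
    have "int (max_degree V E) = int (card V) - 1" using \<open>max_degree V E = card V - 1\<close> assms(2) by simp
    then show ?thesis using c assms(2) by simp
  qed
next
  assume h: "3 \<le> max_degree V E \<and> max_degree V E \<le> card V - 2"
  then have c: "connected_forcing_number V E \<le> connected_domination_number V E * (max_degree V E - 1)"
    using case_main[OF assms] by blast
  have "int (connected_domination_number V E * (max_degree V E - 1))
      = int (connected_domination_number V E) * (int (max_degree V E) - 1)"
    using h by (simp add: of_nat_diff)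
  then show "int (connected_forcing_number V E)
             \<le> int (connected_domination_number V E) * (int (max_degree V E) - 1)"
    using c by (metis of_nat_le_iff)
qed

end
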